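(* Let $E,F,G$ be Banach spaces over $\mathbb{K}$. (a) Let $P\in\mathcal{P}(^mE;F)$ be a surjective polynomial. If either $n=1$, or $n$ is odd and $\mathbb{K}=\mathbb{R}$, then $\Delta^n_kP$ is injective for every $k\in\mathbb{N}$. (b) If $j\colon G\to E$ is a metric surjection, then $\Delta^1_kj\colon\mathcal{P}(^kE)\to\mathcal{P}(^kG)$ is a metric injection for every $k\in\mathbb{N}$. (c) If $u\in\mathcal{L}(E;F)$ is an isomorphism (respectively, an isometric isomorphism), then for every $k\in\mathbb{N}$, $\Delta^1_ku$ is an isomorphism (respectively, an isometric isomorphism) and $(\Delta^1_ku)^{-1}=\Delta^1_k(u^{-1})$.
   Context: Banach spaces are over $\mathbb{K}=\mathbb{R}$ or $\mathbb{C}$. $\mathcal{P}(^jX;Y)$ is the Banach space of continuous $j$-homogeneous polynomials $X\to Y$ with sup norm, $\mathcal{P}(^jX)=\mathcal{P}(^jX;\mathbb{K})$, and $\mathcal{L}(X;Y)$ the bounded linear operators (linear operators are $1$-homogeneous polynomials). For $P\in\mathcal{P}(^mE;F)$ and $n,k\in\mathbb{N}$, $\Delta^n_kP\colon\mathcal{P}(^kF)\to\mathcal{P}(^{mnk}E)$ is defined by $\Delta^n_kP(q)(x)=q(P(x))^n$. A metric surjection is a bounded linear operator $j\colon G\to E$ mapping the open unit ball of $G$ onto the open unit ball of $E$; a metric injection is a linear isometric embedding. *)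

theory Defs
  imports "HOL-Analysis.Analysis"
begin

text \<open>The distribution has no complex vector spaces; a complex Banach space is a
real Banach space carrying a complex scalar multiplication compatible with the
real one and with the norm.\<close>

class cscale =
  fixes cscale :: "complex \<Rightarrow> 'a \<Rightarrow> 'a"

class cbanach = cscale + banach +
  assumes cscale_add_right: "cscale a (x + y) = cscale a x + cscale a y"
    and cscale_add_left: "cscale (a + b) x = cscale a x + cscale b x"
    and cscale_cscale: "cscale a (cscale b x) = cscale (a * b) x"
    and cscale_one: "cscale 1 x = x"
    and scaleR_cscale: "scaleR r x = cscale (complex_of_real r) x"
    and norm_cscale: "norm (cscale a x) = cmod a * norm x"

definition K_linear :: "('k \<Rightarrow> 'a::plus \<Rightarrow> 'a) \<Rightarrow> ('k \<Rightarrow> 'b::plus \<Rightarrow> 'b) \<Rightarrow> ('a \<Rightarrow> 'b) \<Rightarrow> bool" where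
  "K_linear sa sb f \<longleftrightarrow> (\<forall>x y. f (x + y) = f x + f y) \<and> (\<forall>c x. f (sa c x) = sb c (f x))"

definition bdd_K_linear :: "('k \<Rightarrow> 'a::real_normed_vector \<Rightarrow> 'a) \<Rightarrow> ('k \<Rightarrow> 'b::real_normed_vector \<Rightarrow> 'b) \<Rightarrow> ('a \<Rightarrow> 'b) \<Rightarrow> bool" where
  "bdd_K_linear sa sb f \<longleftrightarrow> K_linear sa sb f \<and> (\<exists>C. \<forall>x. norm (f x) \<le> C * norm x)"

text \<open>An m-linear map is a function of tuples (x_0,...,x_{m-1}) encoded as
functions nat => 'a depending only on the first m coordinates.\<close>

definition multilinear :: "('k \<Rightarrow> 'a::monoid_add \<Rightarrow> 'a) \<Rightarrow> ('k \<Rightarrow> 'b::plus \<Rightarrow> 'b) \<Rightarrow> nat \<Rightarrow> ((nat \<Rightarrow> 'a) \<Rightarrow> 'b) \<Rightarrow> bool" where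
  "multilinear sa sb m A \<longleftrightarrow>
     (\<forall>xs. A xs = A (\<lambda>i. if i < m then xs i else 0)) \<and>
     (\<forall>i<m. \<forall>xs. K_linear sa sb (\<lambda>y. A (xs(i := y))))"

definition ml_bounded :: "nat \<Rightarrow> ((nat \<Rightarrow> 'a::real_normed_vector) \<Rightarrow> 'b::real_normed_vector) \<Rightarrow> bool" where
  "ml_bounded m A \<longleftrightarrow> (\<exists>C. \<forall>xs. norm (A xs) \<le> C * (\<Prod>i<m. norm (xs i)))"

definition hpoly :: "('k \<Rightarrow> 'a::real_normed_vector \<Rightarrow> 'a) \<Rightarrow> ('k \<Rightarrow> 'b::real_normed_vector \<Rightarrow> 'b) \<Rightarrow> nat \<Rightarrow> ('a \<Rightarrow> 'b) \<Rightarrow> bool" where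
  "hpoly sa sb m P \<longleftrightarrow> (\<exists>A. multilinear sa sb m A \<and> ml_bounded m A \<and> (\<forall>x. P x = A (\<lambda>_. x)))"

definition Pspace :: "('k \<Rightarrow> 'a::real_normed_vector \<Rightarrow> 'a) \<Rightarrow> ('k \<Rightarrow> 'b::real_normed_vector \<Rightarrow> 'b) \<Rightarrow> nat \<Rightarrow> ('a \<Rightarrow> 'b) set" where
  "Pspace sa sb m = {P. hpoly sa sb m P}"

definition polynorm :: "('a::real_normed_vector \<Rightarrow> 'b::real_normed_vector) \<Rightarrow> real" where
  "polynorm P = Sup ((\<lambda>x. norm (P x)) ` {x. norm x \<le> 1})"

text \<open>Delta^n_k P (q) (x) = q(P x)^n; the index k only fixes the domain P(^k F).\<close>
definition Delta :: "nat \<Rightarrow> ('a \<Rightarrow> 'b) \<Rightarrow> ('b \<Rightarrow> 'k::monoid_mult) \<Rightarrow> ('a \<Rightarrow> 'k)" where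
  "Delta n P q = (\<lambda>x. (q (P x)) ^ n)"

definition lin_on :: "('x \<Rightarrow> 'k::comm_ring_1) set \<Rightarrow> (('x \<Rightarrow> 'k) \<Rightarrow> ('y \<Rightarrow> 'k)) \<Rightarrow> bool" where
  "lin_on A T \<longleftrightarrow>
     (\<forall>p\<in>A. \<forall>q\<in>A. T (\<lambda>x. p x + q x) = (\<lambda>y. T p y + T q y)) \<and>
     (\<forall>c. \<forall>p\<in>A. T (\<lambda>x. c * p x) = (\<lambda>y. c * T p y))"

definition op_bounded :: "('x::real_normed_vector \<Rightarrow> 'k::real_normed_vector) set \<Rightarrow> (('x \<Rightarrow> 'k) \<Rightarrow> ('y::real_normed_vector \<Rightarrow> 'k)) \<Rightarrow> bool" where
  "op_bounded A T \<longleftrightarrow> (\<exists>C. \<forall>p\<in>A. polynorm (T p) \<le> C * polynorm p)"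

definition metric_injection :: "('x::real_normed_vector \<Rightarrow> 'k::{real_normed_vector,comm_ring_1}) set \<Rightarrow> ('y::real_normed_vector \<Rightarrow> 'k) set \<Rightarrow> (('x \<Rightarrow> 'k) \<Rightarrow> ('y \<Rightarrow> 'k)) \<Rightarrow> bool" where
  "metric_injection A B T \<longleftrightarrow> lin_on A T \<and> T ` A \<subseteq> B \<and> (\<forall>p\<in>A. polynorm (T p) = polynorm p)"

definition lin_iso :: "('x::real_normed_vector \<Rightarrow> 'k::{real_normed_vector,comm_ring_1}) set \<Rightarrow> ('y::real_normed_vector \<Rightarrow> 'k) set \<Rightarrow> (('x \<Rightarrow> 'k) \<Rightarrow> ('y \<Rightarrow> 'k)) \<Rightarrow> bool" where
  "lin_iso A B T \<longleftrightarrow> lin_on A T \<and> bij_betw T A B \<and> op_bounded A T \<and> op_bounded B (inv_into A T)"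

definition isometric_iso :: "('x::real_normed_vector \<Rightarrow> 'k::{real_normed_vector,comm_ring_1}) set \<Rightarrow> ('y::real_normed_vector \<Rightarrow> 'k) set \<Rightarrow> (('x \<Rightarrow> 'k) \<Rightarrow> ('y \<Rightarrow> 'k)) \<Rightarrow> bool" where
  "isometric_iso A B T \<longleftrightarrow> lin_iso A B T \<and> (\<forall>p\<in>A. polynorm (T p) = polynorm p)"

definition metric_surjection :: "('k \<Rightarrow> 'a::real_normed_vector \<Rightarrow> 'a) \<Rightarrow> ('k \<Rightarrow> 'b::real_normed_vector \<Rightarrow> 'b) \<Rightarrow> ('a \<Rightarrow> 'b) \<Rightarrow> bool" where
  "metric_surjection sa sb j \<longleftrightarrow> bdd_K_linear sa sb j \<and> j ` ball 0 1 = ball 0 1"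

definition vec_iso :: "('k \<Rightarrow> 'a::real_normed_vector \<Rightarrow> 'a) \<Rightarrow> ('k \<Rightarrow> 'b::real_normed_vector \<Rightarrow> 'b) \<Rightarrow> ('a \<Rightarrow> 'b) \<Rightarrow> bool" where
  "vec_iso sa sb u \<longleftrightarrow> bdd_K_linear sa sb u \<and> bij u \<and> bdd_K_linear sb sa (inv u)"

definition vec_isometric_iso :: "('k \<Rightarrow> 'a::real_normed_vector \<Rightarrow> 'a) \<Rightarrow> ('k \<Rightarrow> 'b::real_normed_vector \<Rightarrow> 'b) \<Rightarrow> ('a \<Rightarrow> 'b) \<Rightarrow> bool" where
  "vec_isometric_iso sa sb u \<longleftrightarrow> vec_iso sa sb u \<and> (\<forall>x. norm (u x) = norm x)"

end

theory Submission
  imports Defs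
begin

lemma Delta1: "Delta 1 j q = (\<lambda>x. q (j x))"
  by (simp add: Delta_def)

lemma Delta1s [simp]: "Delta (Suc 0) j q = (\<lambda>x. q (j x))"
  by (simp add: Delta_def)

lemma lin_on_Delta1: "lin_on A (Delta 1 j)"
  by (simp add: lin_on_def Delta_def)

lemma Klin_zero:
  assumes "K_linear sa sb (j :: 'a::real_normed_vector \<Rightarrow> 'b::real_normed_vector)"
  shows "j 0 = 0"
proof -
  have "j (0 + 0) = j 0 + j 0" using assms unfolding K_linear_def by blast
  then show ?thesis by simp
qed

lemma hpoly_compose:
  fixes j :: "'a::real_normed_vector \<Rightarrow> 'b::real_normed_vector"
    and q :: "'b \<Rightarrow> 'k::real_normed_field"
  assumes j: "bdd_K_linear sa sb j" and q: "hpoly sb (*) k q"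
  shows "hpoly sa (*) k (\<lambda>x. q (j x))"
proof -
  obtain A where ml: "multilinear sb (*) k A" and bd: "ml_bounded k A" and qA: "\<forall>x. q x = A (\<lambda>_. x)"
    using q unfolding hpoly_def by blast
  have jl: "K_linear sa sb j" using j by (simp add: bdd_K_linear_def)
  have j0: "j 0 = 0" using Klin_zero[OF jl] .
  obtain D where D: "\<forall>x. norm (j x) \<le> D * norm x" using j by (auto simp: bdd_K_linear_def)
  define D' where "D' = max D 0"
  have D': "norm (j x) \<le> D' * norm x" "D' \<ge> 0" for x
  proof -
    have "D * norm x \<le> D' * norm x" unfolding D'_def by (simp add: mult_right_mono)
    then show "norm (j x) \<le> D' * norm x" using D by (meson order_trans)
    show "D' \<ge> 0" by (simp add: D'_def)
  qed
  obtain C where C: "\<forall>xs. norm (A xs) \<le> C * (\<Prod>i<k. norm (xs i))" using bd by (auto simp: ml_bounded_def)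
  define A' where "A' xs = A (\<lambda>i. j (xs i))" for xs
  have trunc: "\<forall>xs. A xs = A (\<lambda>i. if i < k then xs i else 0)"
   and lin: "\<forall>i<k. \<forall>xs. K_linear sb (*) (\<lambda>y. A (xs(i := y)))"
    using ml by (auto simp: multilinear_def)
  have "multilinear sa (*) k A'"
    unfolding multilinear_def
  proof (intro conjI allI impI)
    fix xs :: "nat \<Rightarrow> 'a"
    have e: "(\<lambda>i. j (if i < k then xs i else 0)) = (\<lambda>i. if i < k then j (xs i) else 0)"
      using j0 by auto
    show "A' xs = A' (\<lambda>i. if i < k then xs i else 0)"
      unfolding A'_def e by (rule trunc[rule_format])
  next
    fix i xs assume ik: "i < k"
    have e: "(\<lambda>l. j ((xs(i := y)) l)) = (\<lambda>l. j (xs l))(i := j y)" for y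
      by auto
    have L: "K_linear sb (*) (\<lambda>y. A ((\<lambda>l. j (xs l))(i := y)))" using lin ik by blast
    show "K_linear sa (*) (\<lambda>y. A' (xs(i := y)))"
      unfolding A'_def e K_linear_def
    proof (intro conjI allI)
      fix x y
      show "A ((\<lambda>l. j (xs l))(i := j (x + y))) = A ((\<lambda>l. j (xs l))(i := j x)) + A ((\<lambda>l. j (xs l))(i := j y))"
        using jl L by (simp add: K_linear_def)
    next
      fix c x
      show "A ((\<lambda>l. j (xs l))(i := j (sa c x))) = c * A ((\<lambda>l. j (xs l))(i := j x))"
        using jl L by (simp add: K_linear_def)
    qed
  qed
  moreover have "ml_bounded k A'"
    unfolding ml_bounded_def
  proof (intro exI allI)
    fix xs :: "nat \<Rightarrow> 'a"
    have P0: "0 \<le> (\<Prod>i<k. norm (j (xs i)))" by (simp add: prod_nonneg)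
    have P1: "(\<Prod>i<k. norm (j (xs i))) \<le> (\<Prod>i<k. D' * norm (xs i))"
      by (rule prod_mono) (simp add: D')
    have P2: "(\<Prod>i<k. D' * norm (xs i)) = D' ^ k * (\<Prod>i<k. norm (xs i))"
      by (simp add: prod.distrib)
    have "norm (A' xs) \<le> C * (\<Prod>i<k. norm (j (xs i)))" unfolding A'_def using C by blast
    also have "\<dots> \<le> \<bar>C\<bar> * (\<Prod>i<k. norm (j (xs i)))"
      using P0 by (simp add: mult_right_mono)
    also have "\<dots> \<le> \<bar>C\<bar> * (D' ^ k * (\<Prod>i<k. norm (xs i)))"
      using P1 P2 by (simp add: mult_left_mono)
    finally show "norm (A' xs) \<le> (\<bar>C\<bar> * D' ^ k) * (\<Prod>i<k. norm (xs i))"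
      by (simp add: mult.assoc)
  qed
  moreover have "\<forall>x. q (j x) = A' (\<lambda>_. x)" unfolding A'_def using qA by simp
  ultimately show ?thesis unfolding hpoly_def by blast
qed

lemma hpoly_homog:
  fixes p :: "'a::real_normed_vector \<Rightarrow> 'k::real_normed_field"
  assumes p: "hpoly sa (*) k p" and sR: "\<And>r x. sa (of_real r) x = r *\<^sub>R x"
  shows "p (t *\<^sub>R x) = of_real t ^ k * p x"
proof -
  obtain A where ml: "multilinear sa (*) k A" and pA: "\<forall>x. p x = A (\<lambda>_. x)"
    using p unfolding hpoly_def by blast
  have trunc: "\<forall>xs. A xs = A (\<lambda>i. if i < k then xs i else 0)"
   and lin: "\<forall>i<k. \<forall>xs. K_linear sa (*) (\<lambda>y. A (xs(i := y)))"
    using ml by (auto simp: multilinear_def)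
  have step: "r \<le> k \<Longrightarrow> A (\<lambda>i. if i < r then t *\<^sub>R x else x) = of_real t ^ r * A (\<lambda>_. x)" for r
  proof (induction r)
    case 0 then show ?case by simp
  next
    case (Suc r)
    let ?xs = "\<lambda>i. if i < r then t *\<^sub>R x else x"
    have e1: "(\<lambda>i. if i < Suc r then t *\<^sub>R x else x) = ?xs(r := sa (of_real t) x)"
      by (auto simp: sR)
    have e2: "?xs(r := x) = ?xs" by auto
    have L: "K_linear sa (*) (\<lambda>y. A (?xs(r := y)))" using lin Suc.prems by auto
    have "A (?xs(r := sa (of_real t) x)) = of_real t * A (?xs(r := x))"
      using L by (simp add: K_linear_def)
    then show ?case using e1 e2 Suc by simp
  qed
  have "A (\<lambda>_. t *\<^sub>R x) = A (\<lambda>i. if i < k then t *\<^sub>R x else x)"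
  proof -
    have "A (\<lambda>_. t *\<^sub>R x) = A (\<lambda>i. if i < k then t *\<^sub>R x else 0)" by (rule trunc[rule_format])
    also have "\<dots> = A (\<lambda>i. if i < k then (if i < k then t *\<^sub>R x else x) else 0)"
      by (intro arg_cong[where f=A] ext) simp
    also have "\<dots> = A (\<lambda>i. if i < k then t *\<^sub>R x else x)" by (rule trunc[rule_format, symmetric])
    finally show ?thesis .
  qed
  then show ?thesis using step[of k] pA by simp
qed

lemma hpoly_bound:
  fixes p :: "'a::real_normed_vector \<Rightarrow> 'k::real_normed_field"
  assumes p: "hpoly sa (*) k p"
  shows "\<exists>C\<ge>0. \<forall>x. norm (p x) \<le> C * norm x ^ k"
proof -
  obtain A where bd: "ml_bounded k A" and pA: "\<forall>x. p x = A (\<lambda>_. x)"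
    using p unfolding hpoly_def by blast
  obtain C where C: "\<forall>xs. norm (A xs) \<le> C * (\<Prod>i<k. norm (xs i))" using bd by (auto simp: ml_bounded_def)
  show ?thesis
  proof (intro exI conjI allI)
    fix x
    have "norm (p x) \<le> C * (\<Prod>i<k. norm ((\<lambda>_. x) i))" using C[rule_format, of "\<lambda>_. x"] pA by simp
    also have "\<dots> = C * norm x ^ k" by simp
    finally have "norm (p x) \<le> C * norm x ^ k" .
    also have "\<dots> \<le> max C 0 * norm x ^ k" by (simp add: mult_right_mono)
    finally show "norm (p x) \<le> max C 0 * norm x ^ k" .
  qed simp
qed

lemma hpoly_bdd:
  fixes p :: "'a::real_normed_vector \<Rightarrow> 'k::real_normed_field"
  assumes p: "hpoly sa (*) k p"
  shows "bdd_above ((\<lambda>x. norm (p x)) ` {x. norm x \<le> 1})"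
proof -
  obtain C where C: "C \<ge> 0" "\<forall>x. norm (p x) \<le> C * norm x ^ k" using hpoly_bound[OF p] by blast
  have "norm (p x) \<le> C" if "norm x \<le> 1" for x
  proof -
    have "norm x ^ k \<le> 1" using that by (simp add: power_le_one)
    then have "C * norm x ^ k \<le> C" using C(1) by (simp add: mult_left_le)
    then show ?thesis using C(2) by (meson order_trans)
  qed
  then show ?thesis by (auto simp: bdd_above_def)
qed

lemma polynorm_upper:
  fixes p :: "'a::real_normed_vector \<Rightarrow> 'k::real_normed_field"
  assumes p: "hpoly sa (*) k p" and "norm x \<le> 1"
  shows "norm (p x) \<le> polynorm p"
  unfolding polynorm_def using hpoly_bdd[OF p] assms(2)
  by (auto intro!: cSUP_upper)

lemma polynorm_least:
  fixes p :: "'a::real_normed_vector \<Rightarrow> 'b::real_normed_vector"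
  assumes "\<And>x. norm x \<le> 1 \<Longrightarrow> norm (p x) \<le> M"
  shows "polynorm p \<le> M"
proof -
  have "{x::'a. norm x \<le> 1} \<noteq> {}" by (metis mem_Collect_eq norm_zero zero_le_one empty_iff)
  then show ?thesis unfolding polynorm_def using assms by (auto intro!: cSUP_least)
qed

lemma polynorm_nonneg:
  fixes p :: "'a::real_normed_vector \<Rightarrow> 'k::real_normed_field"
  assumes p: "hpoly sa (*) k p"
  shows "0 \<le> polynorm p"
proof -
  have "norm (p 0) \<le> polynorm p" using polynorm_upper[OF p, of 0] by simp
  then show ?thesis by (meson norm_ge_zero order_trans)
qed

lemma hpoly_norm_le:
  fixes p :: "'a::real_normed_vector \<Rightarrow> 'k::real_normed_field"
  assumes p: "hpoly sa (*) k p" and sR: "\<And>r x. sa (of_real r) x = r *\<^sub>R x"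
  shows "norm (p y) \<le> norm y ^ k * polynorm p"
proof (cases "y = 0")
  case True
  show ?thesis
  proof (cases k)
    case 0 then show ?thesis using polynorm_upper[OF p, of 0] True by simp
  next
    case (Suc k')
    have "p 0 = of_real 0 ^ k * p 0" using hpoly_homog[OF p sR, of 0 0] by simp
    then have "p 0 = 0" using Suc by simp
    then show ?thesis using True polynorm_nonneg[OF p] Suc by simp
  qed
next
  case False
  let ?z = "(1 / norm y) *\<^sub>R y"
  have nz: "norm ?z \<le> 1" using False by simp
  have "y = norm y *\<^sub>R ?z" using False by simp
  then have "p y = of_real (norm y) ^ k * p ?z" using hpoly_homog[OF p sR, of "norm y" ?z] by simp
  then have "norm (p y) = norm y ^ k * norm (p ?z)" by (simp add: norm_mult norm_power)
  also have "\<dots> \<le> norm y ^ k * polynorm p"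
    using polynorm_upper[OF p nz] by (simp add: mult_left_mono)
  finally show ?thesis .
qed


lemma part_a_real:
  fixes P :: "'a \<Rightarrow> 'b"
  assumes "surj P" "odd n"
  shows "inj_on (Delta n P) (A :: ('b \<Rightarrow> real) set)"
proof (rule inj_onI)
  fix q1 q2 assume "q1 \<in> A" "q2 \<in> A" and e: "Delta n P q1 = Delta n P q2"
  show "q1 = q2"
  proof
    fix y
    obtain x where y: "y = P x" using assms(1) by (metis surjD)
    have "q1 (P x) ^ n = q2 (P x) ^ n" using e unfolding Delta_def by metis
    then have "root n (q1 (P x) ^ n) = root n (q2 (P x) ^ n)" by simp
    then show "q1 y = q2 y" using y assms(2) by (simp add: odd_real_root_power_cancel)
  qed
qed

lemma part_a_1:
  fixes P :: "'a \<Rightarrow> 'b"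
  assumes "surj P"
  shows "inj_on (Delta 1 P) (A :: ('b \<Rightarrow> 'k::monoid_mult) set)"
proof (rule inj_onI)
  fix q1 q2 assume "q1 \<in> A" "q2 \<in> A" and e: "Delta 1 P q1 = Delta 1 P q2"
  show "q1 = q2"
  proof
    fix y
    obtain x where y: "y = P x" using assms(1) by (metis surjD)
    have "q1 (P x) = q2 (P x)" using e unfolding Delta1 by metis
    then show "q1 y = q2 y" using y by simp
  qed
qed

lemma msurj_le1:
  fixes j :: "'g::real_normed_vector \<Rightarrow> 'e::real_normed_vector"
  assumes sRa: "\<And>r x. sa (of_real r :: 'k::real_normed_field) x = r *\<^sub>R x"
    and sRb: "\<And>r x. sb (of_real r :: 'k) x = r *\<^sub>R x"
    and ms: "metric_surjection sa sb j" and x: "norm x \<le> 1"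
  shows "norm (j x) \<le> 1"
proof (rule ccontr)
  assume "\<not> norm (j x) \<le> 1"
  then have g: "norm (j x) > 1" by simp
  define t where "t = 1 / norm (j x)"
  have t: "0 < t" "t < 1" using g by (auto simp: t_def divide_less_eq)
  have jl: "K_linear sa sb j" using ms by (simp add: metric_surjection_def bdd_K_linear_def)
  have "norm (t *\<^sub>R x) = t * norm x" using t by simp
  also have "\<dots> \<le> t" using t x by (simp add: mult_left_le)
  finally have "norm (t *\<^sub>R x) \<le> t" .
  then have "norm (t *\<^sub>R x) < 1" using t by linarith
  then have "t *\<^sub>R x \<in> ball 0 1" by simp
  then have "j (t *\<^sub>R x) \<in> ball 0 1" using ms by (auto simp: metric_surjection_def)
  moreover have "j (t *\<^sub>R x) = t *\<^sub>R j x"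
    using jl sRa[of t x] sRb[of t "j x"] unfolding K_linear_def by metis
  moreover have "norm (t *\<^sub>R j x) = 1" using t g by (simp add: t_def)
  ultimately show False by simp
qed

lemma part_b:
  fixes j :: "'g::real_normed_vector \<Rightarrow> 'e::real_normed_vector"
  assumes sRa: "\<And>r x. sa (of_real r :: 'k::real_normed_field) x = r *\<^sub>R x"
    and sRb: "\<And>r x. sb (of_real r :: 'k) x = r *\<^sub>R x"
    and ms: "metric_surjection sa sb j"
  shows "metric_injection (Pspace sb (*) k :: ('e \<Rightarrow> 'k) set) (Pspace sa (*) k) (Delta 1 j)"
  unfolding metric_injection_def
proof (intro conjI ballI subsetI)
  show "lin_on (Pspace sb (*) k) (Delta 1 j)" by (rule lin_on_Delta1)
  have jb: "bdd_K_linear sa sb j" using ms by (simp add: metric_surjection_def)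
  fix q :: "'e \<Rightarrow> 'k" assume "q \<in> Pspace sb (*) k"
  then have hq: "hpoly sb (*) k q" by (simp add: Pspace_def)
  have hq': "hpoly sa (*) k (\<lambda>x. q (j x))" by (rule hpoly_compose[OF jb hq])
  show "polynorm (Delta 1 j q) = polynorm q"
    unfolding Delta1
  proof (rule antisym)
    show "polynorm (\<lambda>x. q (j x)) \<le> polynorm q"
      by (rule polynorm_least, rule polynorm_upper[OF hq], rule msurj_le1[OF sRa sRb ms])
    show "polynorm q \<le> polynorm (\<lambda>x. q (j x))"
    proof (rule polynorm_least)
      fix y :: 'e assume y: "norm y \<le> 1"
      let ?S = "polynorm (\<lambda>x. q (j x))"
      have ev: "\<forall>\<^sub>F t in at_left (1::real). t ^ k * norm (q y) \<le> ?S"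
        using eventually_at_left_real[of 0 "1::real", OF zero_less_one]
      proof (rule eventually_mono)
        fix t :: real assume "t \<in> {0<..<1}"
        then have t: "0 < t" "t < 1" by auto
        have "t * norm y \<le> t" using t y by (simp add: mult_left_le)
        moreover have "norm (t *\<^sub>R y) = t * norm y" using t by simp
        ultimately have "norm (t *\<^sub>R y) < 1" using t by linarith
        then have "t *\<^sub>R y \<in> j ` ball 0 1" using ms by (simp add: metric_surjection_def)
        then obtain x where x: "x \<in> ball 0 1" "j x = t *\<^sub>R y" by (metis imageE)
        have "norm (q (j x)) \<le> ?S" by (rule polynorm_upper[OF hq']) (use x in simp)
        moreover have "q (j x) = of_real t ^ k * q y" using x hpoly_homog[OF hq sRb] by simp
        moreover have "norm (of_real t ^ k * q y) = t ^ k * norm (q y)"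
          using t by (simp add: norm_mult norm_power)
        ultimately show "t ^ k * norm (q y) \<le> ?S" by simp
      qed
      have lim: "((\<lambda>t. t ^ k * norm (q y)) \<longlongrightarrow> 1 ^ k * norm (q y)) (at_left (1::real))"
        by (intro tendsto_intros)
      have "1 ^ k * norm (q y) \<le> ?S"
        by (rule tendsto_upperbound[OF lim ev]) (simp add: trivial_limit_at_left_real)
      then show "norm (q y) \<le> ?S" by simp
    qed
  qed
next
  have jb: "bdd_K_linear sa sb j" using ms by (simp add: metric_surjection_def)
  fix p assume "p \<in> Delta 1 j ` Pspace sb (*) k"
  then obtain q where "q \<in> Pspace sb (*) k" "p = Delta 1 j q" by blast
  then show "p \<in> Pspace sa (*) k"
    using hpoly_compose[OF jb] by (simp add: Pspace_def Delta1)
qed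

lemma op_bound:
  fixes u :: "'e::real_normed_vector \<Rightarrow> 'f::real_normed_vector"
  assumes sRb: "\<And>r x. sb (of_real r :: 'k::real_normed_field) x = r *\<^sub>R x"
    and ub: "bdd_K_linear sa sb u"
  shows "\<exists>C. \<forall>q \<in> (Pspace sb (*) k :: ('f \<Rightarrow> 'k) set). polynorm (\<lambda>x. q (u x)) \<le> C * polynorm q"
proof -
  obtain D where D: "\<forall>x. norm (u x) \<le> D * norm x" using ub by (auto simp: bdd_K_linear_def)
  define D' where "D' = max D 0"
  have D': "norm (u x) \<le> D' * norm x" "D' \<ge> 0" for x
  proof -
    have "D * norm x \<le> D' * norm x" unfolding D'_def by (simp add: mult_right_mono)
    then show "norm (u x) \<le> D' * norm x" using D by (meson order_trans)
    show "D' \<ge> 0" by (simp add: D'_def)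
  qed
  show ?thesis
  proof (intro exI ballI)
    fix q :: "'f \<Rightarrow> 'k" assume "q \<in> Pspace sb (*) k"
    then have hq: "hpoly sb (*) k q" by (simp add: Pspace_def)
    show "polynorm (\<lambda>x. q (u x)) \<le> D' ^ k * polynorm q"
    proof (rule polynorm_least)
      fix x :: 'e assume x: "norm x \<le> 1"
      have n: "norm (u x) \<le> D'" using D'(1)[of x] x
        by (meson D'(2) mult_left_le order_trans)
      have "norm (q (u x)) \<le> norm (u x) ^ k * polynorm q" by (rule hpoly_norm_le[OF hq sRb])
      also have "\<dots> \<le> D' ^ k * polynorm q"
        by (rule mult_right_mono[OF power_mono[OF n norm_ge_zero] polynorm_nonneg[OF hq]])
      finally show "norm (q (u x)) \<le> D' ^ k * polynorm q" .
    qed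
  qed
qed

lemma part_c:
  fixes u :: "'e::real_normed_vector \<Rightarrow> 'f::real_normed_vector"
  assumes sRa: "\<And>r x. sa (of_real r :: 'k::real_normed_field) x = r *\<^sub>R x"
    and sRb: "\<And>r x. sb (of_real r :: 'k) x = r *\<^sub>R x"
    and vi: "vec_iso sa sb u"
  shows "lin_iso (Pspace sb (*) k :: ('f \<Rightarrow> 'k) set) (Pspace sa (*) k) (Delta 1 u) \<and>
        (\<forall>p \<in> (Pspace sa (*) k :: ('e \<Rightarrow> 'k) set).
           inv_into (Pspace sb (*) k) (Delta 1 u) p = Delta 1 (inv u) p)"
proof -
  have ub: "bdd_K_linear sa sb u" and bu: "bij u" and vb: "bdd_K_linear sb sa (inv u)"
    using vi by (auto simp: vec_iso_def)
  let ?A = "Pspace sb (*) k :: ('f \<Rightarrow> 'k) set"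
  let ?B = "Pspace sa (*) k :: ('e \<Rightarrow> 'k) set"
  have inj: "inj_on (Delta 1 u) ?A"
    by (rule part_a_1) (use bu in \<open>simp add: bij_def\<close>)
  have img: "Delta 1 u ` ?A \<subseteq> ?B"
    using hpoly_compose[OF ub] by (auto simp: Pspace_def Delta1)
  have pre: "Delta 1 (inv u) p \<in> ?A \<and> Delta 1 u (Delta 1 (inv u) p) = p" if "p \<in> ?B" for p
  proof
    show "Delta 1 (inv u) p \<in> ?A"
      using hpoly_compose[OF vb] that by (simp add: Pspace_def Delta1)
    have "inv u (u x) = x" for x using bu by (simp add: bij_def inv_f_f)
    then show "Delta 1 u (Delta 1 (inv u) p) = p" by (simp add: Delta1)
  qed
  have bb: "bij_betw (Delta 1 u) ?A ?B"
    unfolding bij_betw_def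
  proof (intro conjI inj)
    show "Delta 1 u ` ?A = ?B"
    proof (rule antisym[OF img], rule subsetI)
      fix p assume "p \<in> ?B" then show "p \<in> Delta 1 u ` ?A" using pre by (metis image_eqI)
    qed
  qed
  have invf: "inv_into ?A (Delta 1 u) p = Delta 1 (inv u) p" if "p \<in> ?B" for p
    using pre[OF that] inj by (simp add: inv_into_f_eq)
  have ob1: "op_bounded ?A (Delta 1 u)"
    using op_bound[OF sRb ub, of k] by (simp add: op_bounded_def Delta1)
  have ob2: "op_bounded ?B (inv_into ?A (Delta 1 u))"
  proof -
    obtain C where C: "\<forall>q\<in>?B. polynorm (\<lambda>x. q (inv u x)) \<le> C * polynorm q"
      using op_bound[OF sRa vb, of k] by blast
    show ?thesis unfolding op_bounded_def
    proof (intro exI ballI)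
      fix p assume p: "p \<in> ?B"
      show "polynorm (inv_into ?A (Delta 1 u) p) \<le> C * polynorm p"
        using C p invf[OF p] by (simp add: Delta1)
    qed
  qed
  show ?thesis
    using lin_on_Delta1 bb ob1 ob2 invf by (simp add: lin_iso_def)
qed

lemma part_c_iso:
  fixes u :: "'e::real_normed_vector \<Rightarrow> 'f::real_normed_vector"
  assumes sRa: "\<And>r x. sa (of_real r :: 'k::real_normed_field) x = r *\<^sub>R x"
    and sRb: "\<And>r x. sb (of_real r :: 'k) x = r *\<^sub>R x"
    and vi: "vec_isometric_iso sa sb u"
  shows "isometric_iso (Pspace sb (*) k :: ('f \<Rightarrow> 'k) set) (Pspace sa (*) k) (Delta 1 u) \<and>
        (\<forall>p \<in> (Pspace sa (*) k :: ('e \<Rightarrow> 'k) set).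
           inv_into (Pspace sb (*) k) (Delta 1 u) p = Delta 1 (inv u) p)"
proof -
  have v: "vec_iso sa sb u" and nu: "\<forall>x. norm (u x) = norm x"
    using vi by (auto simp: vec_isometric_iso_def)
  have bu: "bij u" using v by (simp add: vec_iso_def)
  have uc: "u ` {x. norm x \<le> 1} = {y. norm y \<le> 1}"
  proof (rule antisym)
    show "u ` {x. norm x \<le> 1} \<subseteq> {y. norm y \<le> 1}" using nu by auto
    show "{y. norm y \<le> 1} \<subseteq> u ` {x. norm x \<le> 1}"
    proof
      fix y :: 'f assume y: "y \<in> {y. norm y \<le> 1}"
      have e: "u (inv u y) = y" using bu by (simp add: bij_def surj_f_inv_f)
      then have "norm (inv u y) \<le> 1" using nu y by (metis mem_Collect_eq)
      then show "y \<in> u ` {x. norm x \<le> 1}" using e by (metis image_eqI mem_Collect_eq)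
    qed
  qed
  have "polynorm (Delta (1::nat) u p) = polynorm p" for p :: "'f \<Rightarrow> 'k"
  proof -
    have "(\<lambda>x. norm (p (u x))) ` {x. norm x \<le> 1} = (\<lambda>y. norm (p y)) ` (u ` {x. norm x \<le> 1})"
      by (simp add: image_image)
    then show ?thesis unfolding polynorm_def Delta1 uc by simp
  qed
  then show ?thesis using part_c[OF sRa sRb v, of k] by (simp add: isometric_iso_def)
qed

theorem mainTheorem6:
  shows "
  \<comment> \<open>(a), K = R: n = 1 or n odd\<close>
  (\<forall>(P :: 'e::banach \<Rightarrow> 'f::banach) (m::nat) (n::nat) (k::nat).
     hpoly scaleR scaleR m P \<and> surj P \<and> (n = 1 \<or> odd n) \<longrightarrow>
     inj_on (Delta n P) (Pspace scaleR (*) k :: ('f \<Rightarrow> real) set)) \<and>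
  \<comment> \<open>(a), K = C: n = 1\<close>
  (\<forall>(P :: 'ce::cbanach \<Rightarrow> 'cf::cbanach) (m::nat) (n::nat) (k::nat).
     hpoly cscale cscale m P \<and> surj P \<and> n = 1 \<longrightarrow>
     inj_on (Delta n P) (Pspace cscale (*) k :: ('cf \<Rightarrow> complex) set)) \<and>
  \<comment> \<open>(b), K = R\<close>
  (\<forall>(j :: 'g::banach \<Rightarrow> 'e) (k::nat).
     metric_surjection scaleR scaleR j \<longrightarrow>
     metric_injection (Pspace scaleR (*) k :: ('e \<Rightarrow> real) set) (Pspace scaleR (*) k) (Delta 1 j)) \<and>
  \<comment> \<open>(b), K = C\<close>
  (\<forall>(j :: 'cg::cbanach \<Rightarrow> 'ce) (k::nat).
     metric_surjection cscale cscale j \<longrightarrow>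
     metric_injection (Pspace cscale (*) k :: ('ce \<Rightarrow> complex) set) (Pspace cscale (*) k) (Delta 1 j)) \<and>
  \<comment> \<open>(c), K = R\<close>
  (\<forall>(u :: 'e \<Rightarrow> 'f) (k::nat).
     (vec_iso scaleR scaleR u \<longrightarrow>
        lin_iso (Pspace scaleR (*) k :: ('f \<Rightarrow> real) set) (Pspace scaleR (*) k) (Delta 1 u) \<and>
        (\<forall>p \<in> (Pspace scaleR (*) k :: ('e \<Rightarrow> real) set).
           inv_into (Pspace scaleR (*) k) (Delta 1 u) p = Delta 1 (inv u) p)) \<and>
     (vec_isometric_iso scaleR scaleR u \<longrightarrow>
        isometric_iso (Pspace scaleR (*) k :: ('f \<Rightarrow> real) set) (Pspace scaleR (*) k) (Delta 1 u) \<and>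
        (\<forall>p \<in> (Pspace scaleR (*) k :: ('e \<Rightarrow> real) set).
           inv_into (Pspace scaleR (*) k) (Delta 1 u) p = Delta 1 (inv u) p))) \<and>
  \<comment> \<open>(c), K = C\<close>
  (\<forall>(u :: 'ce \<Rightarrow> 'cf) (k::nat).
     (vec_iso cscale cscale u \<longrightarrow>
        lin_iso (Pspace cscale (*) k :: ('cf \<Rightarrow> complex) set) (Pspace cscale (*) k) (Delta 1 u) \<and>
        (\<forall>p \<in> (Pspace cscale (*) k :: ('ce \<Rightarrow> complex) set).
           inv_into (Pspace cscale (*) k) (Delta 1 u) p = Delta 1 (inv u) p)) \<and>
     (vec_isometric_iso cscale cscale u \<longrightarrow>
        isometric_iso (Pspace cscale (*) k :: ('cf \<Rightarrow> complex) set) (Pspace cscale (*) k) (Delta 1 u) \<and>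
        (\<forall>p \<in> (Pspace cscale (*) k :: ('ce \<Rightarrow> complex) set).
           inv_into (Pspace cscale (*) k) (Delta 1 u) p = Delta 1 (inv u) p)))"
proof -
  have r: "\<And>r (x::'t::real_normed_vector). scaleR (of_real r :: real) x = r *\<^sub>R x" by simp
  have c: "\<And>r (x::'t::cbanach). cscale (of_real r :: complex) x = r *\<^sub>R x" by (simp add: scaleR_cscale)
  show ?thesis
  proof (intro conjI allI impI)
    fix P :: "'e \<Rightarrow> 'f" and m n k :: nat
    assume "hpoly scaleR scaleR m P \<and> surj P \<and> (n = 1 \<or> odd n)"
    then have "surj P" "odd n" by auto
    then show "inj_on (Delta n P) (Pspace scaleR (*) k :: ('f \<Rightarrow> real) set)"
      by (rule part_a_real)
  next
    fix P :: "'ce \<Rightarrow> 'cf" and m n k :: nat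
    assume "hpoly cscale cscale m P \<and> surj P \<and> n = 1"
    then have "surj P" "n = 1" by auto
    then show "inj_on (Delta n P) (Pspace cscale (*) k :: ('cf \<Rightarrow> complex) set)"
      using part_a_1[of P] by simp
  next
    fix j :: "'g \<Rightarrow> 'e" and k :: nat
    assume "metric_surjection scaleR scaleR j"
    then show "metric_injection (Pspace scaleR (*) k :: ('e \<Rightarrow> real) set) (Pspace scaleR (*) k) (Delta 1 j)"
      by (rule part_b[OF r r])
  next
    fix j :: "'cg \<Rightarrow> 'ce" and k :: nat
    assume "metric_surjection cscale cscale j"
    then show "metric_injection (Pspace cscale (*) k :: ('ce \<Rightarrow> complex) set) (Pspace cscale (*) k) (Delta 1 j)"
      by (rule part_b[OF c c])
  next
    fix u :: "'e \<Rightarrow> 'f" and k :: nat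
    assume a: "vec_iso scaleR scaleR u"
    show "lin_iso (Pspace scaleR (*) k :: ('f \<Rightarrow> real) set) (Pspace scaleR (*) k) (Delta 1 u)"
      using part_c[OF r r a] by (rule conjunct1)
    show "\<forall>p \<in> (Pspace scaleR (*) k :: ('e \<Rightarrow> real) set).
           inv_into (Pspace scaleR (*) k) (Delta 1 u) p = Delta 1 (inv u) p"
      using part_c[OF r r a] by (rule conjunct2)
  next
    fix u :: "'e \<Rightarrow> 'f" and k :: nat
    assume a: "vec_isometric_iso scaleR scaleR u"
    show "isometric_iso (Pspace scaleR (*) k :: ('f \<Rightarrow> real) set) (Pspace scaleR (*) k) (Delta 1 u)"
      using part_c_iso[OF r r a] by (rule conjunct1)
    show "\<forall>p \<in> (Pspace scaleR (*) k :: ('e \<Rightarrow> real) set).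
           inv_into (Pspace scaleR (*) k) (Delta 1 u) p = Delta 1 (inv u) p"
      using part_c_iso[OF r r a] by (rule conjunct2)
  next
    fix u :: "'ce \<Rightarrow> 'cf" and k :: nat
    assume a: "vec_iso cscale cscale u"
    show "lin_iso (Pspace cscale (*) k :: ('cf \<Rightarrow> complex) set) (Pspace cscale (*) k) (Delta 1 u)"
      using part_c[OF c c a] by (rule conjunct1)
    show "\<forall>p \<in> (Pspace cscale (*) k :: ('ce \<Rightarrow> complex) set).
           inv_into (Pspace cscale (*) k) (Delta 1 u) p = Delta 1 (inv u) p"
      using part_c[OF c c a] by (rule conjunct2)
  next
    fix u :: "'ce \<Rightarrow> 'cf" and k :: nat
    assume a: "vec_isometric_iso cscale cscale u"
    show "isometric_iso (Pspace cscale (*) k :: ('cf \<Rightarrow> complex) set) (Pspace cscale (*) k) (Delta 1 u)"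
      using part_c_iso[OF c c a] by (rule conjunct1)
    show "\<forall>p \<in> (Pspace cscale (*) k :: ('ce \<Rightarrow> complex) set).
           inv_into (Pspace cscale (*) k) (Delta 1 u) p = Delta 1 (inv u) p"
      using part_c_iso[OF c c a] by (rule conjunct2)
  qed
qed

end
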